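(* In the setting of the context, assume further that $\theta^*_i\ne\theta^*_0$ for $1\le i\le d$. Then the graph $\Delta$ is connected.
   Context: Let $\mathbb F$ be a field, $d\ge1$ an integer, $V$ a vector space over $\mathbb F$ of dimension $d+1$, $\mathcal A=\mathrm{End}(V)$ with identity $I$. Let $E^*_0,\dots,E^*_d\in\mathcal A$ satisfy $E^*_iE^*_j=\delta_{i,j}E^*_i$ and $\mathrm{rank}(E^*_i)=1$ for $0\le i,j\le d$. Let $A\in\mathcal A$ satisfy $E^*_iAE^*_j=0$ if $|i-j|>1$ and $E^*_iAE^*_j\neq0$ if $|i-j|=1$. Assume $A$ is multiplicity-free, i.e. has $d+1$ mutually distinct eigenvalues $\theta_0,\dots,\theta_d$ in $\mathbb F$, and let $E_i=\prod_{j\ne i}\frac{A-\theta_jI}{\theta_i-\theta_j}$ be the primitive idempotent of $A$ for $\theta_i$. Let $\theta^*_0,\dots,\theta^*_d\in\mathbb F$ and $A^*=\sum_{i=0}^d\theta^*_iE^*_i$. Let $\Delta$ be the graph on vertex set $\{0,1,\dots,d\}$ in which $i,j$ are adjacent iff $i\ne j$ and $E_iA^*E_j\neq0$ (this relation is symmetric). *)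

theory Defs
  imports "Jordan_Normal_Form.DL_Rank" "Jordan_Normal_Form.Jordan_Normal_Form"
begin

text \<open>End(V) for dim V = n is represented by n x n matrices over the field.\<close>

definition prim_idem :: "nat \<Rightarrow> 'a::field mat \<Rightarrow> (nat \<Rightarrow> 'a) \<Rightarrow> nat \<Rightarrow> 'a mat" where
  "prim_idem d A th i =
     foldr (\<lambda>j M. ((1 / (th i - th j)) \<cdot>\<^sub>m (A - th j \<cdot>\<^sub>m 1\<^sub>m (Suc d))) * M)
       (filter (\<lambda>j. j \<noteq> i) [0..<Suc d]) (1\<^sub>m (Suc d))"

definition dual_op :: "nat \<Rightarrow> (nat \<Rightarrow> 'a::field mat) \<Rightarrow> (nat \<Rightarrow> 'a) \<Rightarrow> 'a mat" where
  "dual_op d Es ths = foldr (\<lambda>i M. ths i \<cdot>\<^sub>m Es i + M) [0..<Suc d] (0\<^sub>m (Suc d) (Suc d))"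

definition Delta_adj :: "nat \<Rightarrow> 'a::field mat \<Rightarrow> (nat \<Rightarrow> 'a) \<Rightarrow> (nat \<Rightarrow> 'a mat) \<Rightarrow> (nat \<Rightarrow> 'a)
    \<Rightarrow> nat \<Rightarrow> nat \<Rightarrow> bool" where
  "Delta_adj d A th Es ths i j \<longleftrightarrow> i \<le> d \<and> j \<le> d \<and> i \<noteq> j \<and>
     prim_idem d A th i * dual_op d Es ths * prim_idem d A th j \<noteq> 0\<^sub>m (Suc d) (Suc d)"

definition Delta_connected :: "nat \<Rightarrow> 'a::field mat \<Rightarrow> (nat \<Rightarrow> 'a) \<Rightarrow> (nat \<Rightarrow> 'a mat) \<Rightarrow> (nat \<Rightarrow> 'a)
    \<Rightarrow> bool" where
  "Delta_connected d A th Es ths \<longleftrightarrow>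
     (\<forall>i\<le>d. \<forall>j\<le>d. (i, j) \<in> {(x, y). Delta_adj d A th Es ths x y}\<^sup>*)"

end

theory Submission
  imports Defs
begin

lemma fold_carrier:
  assumes A: "A \<in> carrier_mat n n"
  shows "foldr (\<lambda>j M. (c j \<cdot>\<^sub>m (A - t j \<cdot>\<^sub>m 1\<^sub>m n)) * M) js (1\<^sub>m n) \<in> carrier_mat n n"
  by (induction js) (use A in auto)

lemma lin_step:
  fixes A :: "'a::field mat"
  assumes A: "A \<in> carrier_mat n n" and w: "w \<in> carrier_vec n" and i: "i < n"
  shows "((c \<cdot>\<^sub>m (A - t \<cdot>\<^sub>m 1\<^sub>m n)) *\<^sub>v w) $ i = c * ((A *\<^sub>v w) $ i - t * w $ i)"
proof -
  have "((c \<cdot>\<^sub>m (A - t \<cdot>\<^sub>m 1\<^sub>m n)) *\<^sub>v w) $ i = (\<Sum>k = 0..<n. c * (A $$ (i,k) * w $ k) - c * t * ((if i = k then 1 else 0) * w $ k))"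
    using A w i by (auto simp: scalar_prod_def algebra_simps intro!: sum.cong)
  also have "\<dots> = c * (\<Sum>k = 0..<n. A $$ (i,k) * w $ k) - c * t * (\<Sum>k = 0..<n. (if i = k then 1 else 0) * w $ k)"
    by (simp add: sum_subtractf sum_distrib_left)
  also have "(\<Sum>k = 0..<n. (if i = k then 1 else 0) * w $ k) = w $ i"
  proof -
    have "(\<Sum>k = 0..<n. (if i = k then 1 else 0) * w $ k) = (\<Sum>k = 0..<n. if k = i then w $ k else 0)"
      by (rule sum.cong) auto
    then show ?thesis using i by simp
  qed
  finally show ?thesis using A w i by (simp add: scalar_prod_def algebra_simps)
qed

lemma fold_vec:
  fixes A :: "'a::field mat"
  assumes A: "A \<in> carrier_mat n n" and v: "v \<in> carrier_vec n" and Av: "A *\<^sub>v v = lam \<cdot>\<^sub>v v"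
  shows "foldr (\<lambda>j M. (c j \<cdot>\<^sub>m (A - t j \<cdot>\<^sub>m 1\<^sub>m n)) * M) js (1\<^sub>m n) *\<^sub>v v
         = prod_list (map (\<lambda>j. c j * (lam - t j)) js) \<cdot>\<^sub>v v"
proof (induction js)
  case Nil then show ?case using v by simp
next
  case (Cons j js)
  let ?M = "foldr (\<lambda>j M. (c j \<cdot>\<^sub>m (A - t j \<cdot>\<^sub>m 1\<^sub>m n)) * M) js (1\<^sub>m n)"
  let ?p = "prod_list (map (\<lambda>j. c j * (lam - t j)) js)"
  have M: "?M \<in> carrier_mat n n" by (rule fold_carrier[OF A])
  have X: "c j \<cdot>\<^sub>m (A - t j \<cdot>\<^sub>m 1\<^sub>m n) \<in> carrier_mat n n" using A by auto
  have "(c j \<cdot>\<^sub>m (A - t j \<cdot>\<^sub>m 1\<^sub>m n) * ?M) *\<^sub>v v = (c j \<cdot>\<^sub>m (A - t j \<cdot>\<^sub>m 1\<^sub>m n)) *\<^sub>v (?M *\<^sub>v v)"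
    using X M v by simp
  also have "\<dots> = (c j \<cdot>\<^sub>m (A - t j \<cdot>\<^sub>m 1\<^sub>m n)) *\<^sub>v (?p \<cdot>\<^sub>v v)"
    using Cons by simp
  also have "\<dots> = (c j * (lam - t j) * ?p) \<cdot>\<^sub>v v"
  proof (rule eq_vecI)
    fix i assume "i < dim_vec ((c j * (lam - t j) * ?p) \<cdot>\<^sub>v v)"
    then have i: "i < n" using v by auto
    have "(A *\<^sub>v (?p \<cdot>\<^sub>v v)) $ i = ?p * (lam * v $ i)"
      using mult_mat_vec[OF A v, of ?p] Av i v by simp
    then show "((c j \<cdot>\<^sub>m (A - t j \<cdot>\<^sub>m 1\<^sub>m n)) *\<^sub>v (?p \<cdot>\<^sub>v v)) $ i = ((c j * (lam - t j) * ?p) \<cdot>\<^sub>v v) $ i"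
      using lin_step[OF A _ i, of "?p \<cdot>\<^sub>v v"] i v by (simp add: algebra_simps)
  qed (use A v in auto)
  finally show ?case by simp
qed

lemma inverse_ex:
  fixes W :: "'a::field mat"
  assumes W: "W \<in> carrier_mat n n" and d: "det W \<noteq> 0"
  shows "\<exists>Wi \<in> carrier_mat n n. W * Wi = 1\<^sub>m n \<and> Wi * W = 1\<^sub>m n"
  using det_non_zero_imp_unit[OF W d, of undefined]
  unfolding Units_def ring_mat_simps by auto

lemma sum_single:
  fixes g :: "nat \<Rightarrow> 'a::comm_monoid_add"
  assumes "a < n" "\<And>k. k < n \<Longrightarrow> k \<noteq> a \<Longrightarrow> g k = 0"
  shows "(\<Sum>k = 0..<n. g k) = g a"
proof -
  have "(\<Sum>k = 0..<n. g k) = (\<Sum>k = 0..<n. if k = a then g k else 0)"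
    by (rule sum.cong) (use assms in auto)
  then show ?thesis using assms by simp
qed

lemma basis_invertible:
  fixes f :: "nat \<Rightarrow> 'a::field vec" and P :: "nat \<Rightarrow> 'a mat"
  assumes f: "\<And>k. k < n \<Longrightarrow> f k \<in> carrier_vec n" and fnz: "\<And>k. k < n \<Longrightarrow> f k \<noteq> 0\<^sub>v n"
    and P: "\<And>a. a < n \<Longrightarrow> P a \<in> carrier_mat n n"
    and Pf: "\<And>a k. a < n \<Longrightarrow> k < n \<Longrightarrow> P a *\<^sub>v f k = (if a = k then f k else 0\<^sub>v n)"
  shows "det (mat n n (\<lambda>(i,k). f k $ i)) \<noteq> 0"
proof
  let ?W = "mat n n (\<lambda>(i,k). f k $ i)"
  have W: "?W \<in> carrier_mat n n" by simp
  assume "det ?W = 0"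
  then obtain c where c: "c \<in> carrier_vec n" "c \<noteq> 0\<^sub>v n" "?W *\<^sub>v c = 0\<^sub>v n"
    using det_0_iff_vec_prod_zero_field[OF W] by auto
  have colW: "col ?W k = f k" if "k < n" for k
    using f[OF that] that by (intro eq_vecI) auto
  have ca: "c $ a = 0" if a: "a < n" for a
  proof -
    have PW: "P a * ?W = mat n n (\<lambda>(i,k). if a = k then f k $ i else 0)"
    proof (rule eq_matI)
      fix i k assume i: "i < dim_row (mat n n (\<lambda>(i,k). if a = k then f k $ i else 0))"
        and k: "k < dim_col (mat n n (\<lambda>(i,k). if a = k then f k $ i else 0))"
      have "(P a * ?W) $$ (i,k) = (P a *\<^sub>v col ?W k) $ i"
        using P[OF a] i k by simp
      then show "(P a * ?W) $$ (i,k) = mat n n (\<lambda>(i,k). if a = k then f k $ i else 0) $$ (i,k)"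
        using colW Pf[OF a] i k by simp
    qed (use P[OF a] in auto)
    have "P a *\<^sub>v (?W *\<^sub>v c) = 0\<^sub>v n" unfolding c(3) using P[OF a] by (intro eq_vecI) (auto simp: scalar_prod_def)
    then have "(P a * ?W) *\<^sub>v c = 0\<^sub>v n" using assoc_mult_mat_vec[OF P[OF a] W c(1)] by simp
    then have eq: "(mat n n (\<lambda>(i,k). if a = k then f k $ i else 0) *\<^sub>v c) $ i = 0" if "i < n" for i
      unfolding PW using that by simp
    obtain i where i: "i < n" "f a $ i \<noteq> 0"
      using fnz[OF a] f[OF a] by (metis carrier_vecD eq_vecI index_zero_vec)
    have "(mat n n (\<lambda>(i,k). if a = k then f k $ i else 0) *\<^sub>v c) $ i = f a $ i * c $ a"
      using i a c by (simp add: scalar_prod_def, subst sum_single[of a]) auto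
    then show ?thesis using eq[OF i(1)] i by simp
  qed
  then have "c = 0\<^sub>v n" using c by (intro eq_vecI) auto
  then show False using c by simp
qed

definition Emat :: "nat \<Rightarrow> nat \<Rightarrow> 'a::field mat" where
  "Emat n a = mat n n (\<lambda>(i,j). if i = a \<and> j = a then 1 else 0)"

lemma mc_sq: "A \<in> carrier_mat n n \<Longrightarrow> B \<in> carrier_mat n n \<Longrightarrow> A * B \<in> carrier_mat n n"
  by (rule mult_carrier_mat)

lemma Emat_carrier[simp]: "Emat n a \<in> carrier_mat n n" by (simp add: Emat_def)
lemma Emat_dims[simp]: "dim_row (Emat n a) = n" "dim_col (Emat n a) = n" by (simp_all add: Emat_def)

lemma proj_form:
  fixes W :: "'a::field mat"
  assumes W: "W \<in> carrier_mat n n" and Wi: "Wi \<in> carrier_mat n n" and WWi: "W * Wi = 1\<^sub>m n"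
    and P: "P \<in> carrier_mat n n" and a: "a < n"
    and Pf: "\<And>k. k < n \<Longrightarrow> P *\<^sub>v col W k = (if a = k then col W k else 0\<^sub>v n)"
  shows "P = W * Emat n a * Wi"
proof -
  have PW: "P * W = W * Emat n a"
  proof (rule eq_matI)
    fix i k assume i: "i < dim_row (W * Emat n a)" and k: "k < dim_col (W * Emat n a)"
    have "(P * W) $$ (i,k) = (P *\<^sub>v col W k) $ i" using P W i k by simp
    also have "\<dots> = (if a = k then W $$ (i,k) else 0)" using Pf[of k] i k W by simp
    also have "\<dots> = row W i \<bullet> col (Emat n a) k"
    proof -
      have "row W i \<bullet> col (Emat n a) k = (\<Sum>l=0..<n. W $$ (i,l) * (if l = a \<and> k = a then 1 else 0))"
        using i k W by (simp add: Emat_def scalar_prod_def)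
      also have "\<dots> = W $$ (i,a) * (if a = a \<and> k = a then 1 else 0)"
        by (rule sum_single) (use a in auto)
      finally show ?thesis by auto
    qed
    finally show "(P * W) $$ (i,k) = (W * Emat n a) $$ (i,k)" using i k W by simp
  qed (use P W in auto)
  have "P = P * (W * Wi)" using P WWi by simp
  also have "\<dots> = (P * W) * Wi" using P W Wi by simp
  also have "\<dots> = W * Emat n a * Wi" unfolding PW ..
  finally show ?thesis .
qed

lemma entry_crit:
  fixes W :: "'a::field mat"
  assumes W: "W \<in> carrier_mat n n" and Wi: "Wi \<in> carrier_mat n n" and WWi: "W * Wi = 1\<^sub>m n"
    and WiW: "Wi * W = 1\<^sub>m n"
    and P: "P \<in> carrier_mat n n" and a: "a < n"
    and Pf: "\<And>k. k < n \<Longrightarrow> P *\<^sub>v col W k = (if a = k then col W k else 0\<^sub>v n)"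
    and Q: "Q \<in> carrier_mat n n" and b: "b < n"
    and Qf: "\<And>k. k < n \<Longrightarrow> Q *\<^sub>v col W k = (if b = k then col W k else 0\<^sub>v n)"
    and M: "M \<in> carrier_mat n n"
  shows "P * M * Q = 0\<^sub>m n n \<longleftrightarrow> (Wi * M * W) $$ (a,b) = 0"
proof -
  let ?X = "Wi * M * W"
  have X: "?X \<in> carrier_mat n n" using Wi M W by simp
  have Xd: "dim_row ?X = n" "dim_col ?X = n" using X by auto
  have PP: "P = W * Emat n a * Wi" by (rule proj_form[OF W Wi WWi P a Pf])
  have QQ: "Q = W * Emat n b * Wi" by (rule proj_form[OF W Wi WWi Q b Qf])
  have cancel: "Wi * (W * Z) = Z" if "Z \<in> carrier_mat n m" for Z m
    using that W Wi WiW by (simp add: assoc_mult_mat[symmetric, of Wi n n W n Z m])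
  let ?Y = "Emat n a * ?X * Emat n b"
  have Y: "?Y \<in> carrier_mat n n" using X by (meson Emat_carrier mult_carrier_mat)
  have e1: "P * M * Q = W * ?Y * Wi"
    unfolding PP QQ using W Wi M X by (simp add: assoc_mult_mat[of _ n n _ n _ n] cancel mc_sq)
  have e2: "Wi * (P * M * Q) * W = ?Y"
    unfolding e1 using W Wi Y WiW by (simp add: assoc_mult_mat[of _ n n _ n _ n] cancel mc_sq)
  have Yent: "?Y $$ (i,j) = (if i = a \<and> j = b then ?X $$ (a,b) else 0)" if "i < n" "j < n" for i j
  proof -
    have "(Emat n a * ?X) $$ (i,k) = (if i = a then ?X $$ (a,k) else 0)" if "k < n" for k
    proof -
      have "(Emat n a * ?X) $$ (i,k) = (\<Sum>l=0..<n. (if i = a \<and> l = a then 1 else 0) * ?X $$ (l,k))"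
        using \<open>i<n\<close> that X Xd by (simp add: Emat_def scalar_prod_def)
      also have "\<dots> = (if i = a \<and> a = a then 1 else 0) * ?X $$ (a,k)"
        by (rule sum_single) (use a in auto)
      finally show ?thesis by simp
    qed
    then have r: "row (Emat n a * ?X) i = vec n (\<lambda>k. if i = a then ?X $$ (a,k) else 0)"
      using \<open>i<n\<close> X by (intro eq_vecI) auto
    have "?Y $$ (i,j) = row (Emat n a * ?X) i \<bullet> col (Emat n b) j"
      by (rule index_mult_mat(1)) (use that in simp_all)
    also have "\<dots> = (\<Sum>l=0..<n. (if i = a then ?X $$ (a,l) else 0) * (if l = b \<and> j = b then 1 else 0))"
      unfolding r using that by (simp add: scalar_prod_def Emat_def)
    also have "\<dots> = (if i = a then ?X $$ (a,b) else 0) * (if b = b \<and> j = b then 1 else 0)"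
      by (rule sum_single) (use b in auto)
    finally show ?thesis by auto
  qed
  show ?thesis
  proof
    assume "P * M * Q = 0\<^sub>m n n"
    then have "?Y = Wi * 0\<^sub>m n n * W" using e2 by simp
    also have "\<dots> = 0\<^sub>m n n" using W Wi by simp
    finally have "?Y $$ (a,b) = 0" using a b by simp
    then show "?X $$ (a,b) = 0" using Yent[OF a b] by simp
  next
    assume "?X $$ (a,b) = 0"
    then have "?Y = 0\<^sub>m n n" using Yent Y by (intro eq_matI) auto
    then show "P * M * Q = 0\<^sub>m n n" using e1 W Wi by simp
  qed
qed

lemma smult_mat_vec: "X \<in> carrier_mat n m \<Longrightarrow> w \<in> carrier_vec m \<Longrightarrow> (c \<cdot>\<^sub>m (X::'a::field mat)) *\<^sub>v w = c \<cdot>\<^sub>v (X *\<^sub>v w)"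
  by (intro eq_vecI) (auto simp: scalar_prod_def sum_distrib_left algebra_simps)

lemma dual_fold:
  fixes Es :: "nat \<Rightarrow> 'a::field mat"
  assumes w: "w \<in> carrier_vec n"
    and E: "\<And>i. i \<in> set l \<Longrightarrow> Es i \<in> carrier_mat n n"
    and Ew: "\<And>i. i \<in> set l \<Longrightarrow> Es i *\<^sub>v w = (if i = j then w else 0\<^sub>v n)"
    and dl: "distinct l"
  shows "foldr (\<lambda>i M. ths i \<cdot>\<^sub>m Es i + M) l (0\<^sub>m n n) \<in> carrier_mat n n \<and>
         foldr (\<lambda>i M. ths i \<cdot>\<^sub>m Es i + M) l (0\<^sub>m n n) *\<^sub>v w = (if j \<in> set l then ths j else 0) \<cdot>\<^sub>v w"
  using E Ew dl
proof (induction l)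
  case Nil
  then show ?case using w by (auto intro!: eq_vecI simp: scalar_prod_def)
next
  case (Cons i l)
  let ?M = "foldr (\<lambda>i M. ths i \<cdot>\<^sub>m Es i + M) l (0\<^sub>m n n)"
  have IH: "?M \<in> carrier_mat n n" "?M *\<^sub>v w = (if j \<in> set l then ths j else 0) \<cdot>\<^sub>v w"
    using Cons by auto
  have Ei: "Es i \<in> carrier_mat n n" using Cons by auto
  have "(ths i \<cdot>\<^sub>m Es i + ?M) *\<^sub>v w = (ths i \<cdot>\<^sub>m Es i) *\<^sub>v w + ?M *\<^sub>v w"
    using Ei IH w by (simp add: add_mult_distrib_mat_vec[of _ n n])
  also have "\<dots> = ths i \<cdot>\<^sub>v (if i = j then w else 0\<^sub>v n) + (if j \<in> set l then ths j else 0) \<cdot>\<^sub>v w"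
    using Cons.prems(2)[of i] IH Ei w by (simp add: smult_mat_vec[OF Ei w])
  also have "\<dots> = (if j \<in> set (i # l) then ths j else 0) \<cdot>\<^sub>v w"
    using Cons.prems(3) w by (intro eq_vecI) auto
  finally show ?case using Ei IH by simp
qed

lemma eig_cols:
  fixes A W :: "'a::field mat"
  assumes A: "A \<in> carrier_mat n n" and W: "W \<in> carrier_mat n n"
    and f: "\<And>k. k < n \<Longrightarrow> A *\<^sub>v col W k = f k \<cdot>\<^sub>v col W k"
  shows "A * W = W * mat n n (\<lambda>(i,j). if i = j then f i else 0)"
proof (rule eq_matI)
  fix i k assume i: "i < dim_row (W * mat n n (\<lambda>(i,j). if i = j then f i else 0))"
    and k: "k < dim_col (W * mat n n (\<lambda>(i,j). if i = j then f i else 0))"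
  have "(A * W) $$ (i,k) = (A *\<^sub>v col W k) $ i" using A W i k by simp
  also have "\<dots> = f k * W $$ (i,k)" using f[of k] i k W by simp
  also have "\<dots> = (\<Sum>l=0..<n. W $$ (i,l) * (if l = k then f l else 0))"
    by (subst sum_single[of k]) (use k W in auto)
  finally show "(A * W) $$ (i,k) = (W * mat n n (\<lambda>(i,j). if i = j then f i else 0)) $$ (i,k)"
    using i k W by (simp add: scalar_prod_def)
qed (use A W in auto)

lemma diag_vec:
  assumes "z \<in> carrier_vec n" "i < n"
  shows "(mat n n (\<lambda>(i,j). if i = j then f i else 0) *\<^sub>v z) $ i = f i * (z $ i :: 'a::field)"
proof -
  have "(mat n n (\<lambda>(i,j). if i = j then f i else 0) *\<^sub>v z) $ i = (\<Sum>l=0..<n. (if i = l then f i else 0) * z $ l)"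
    using assms by (simp add: scalar_prod_def)
  also have "\<dots> = (if i = i then f i else 0) * z $ i"
    by (rule sum_single) (use assms in auto)
  finally show ?thesis by simp
qed

lemma mat_unit_vec:
  fixes W :: "'a::field mat"
  assumes "W \<in> carrier_mat n n" "k < n"
  shows "W *\<^sub>v unit_vec n k = col W k"
proof (rule eq_vecI)
  fix i assume i: "i < dim_vec (col W k)"
  have "(W *\<^sub>v unit_vec n k) $ i = (\<Sum>l=0..<n. W $$ (i,l) * (if l = k then 1 else 0))"
    using assms i by (simp add: scalar_prod_def)
  also have "\<dots> = W $$ (i,k) * (if k = k then 1 else 0)"
    by (rule sum_single) (use assms in auto)
  finally show "(W *\<^sub>v unit_vec n k) $ i = col W k $ i" using assms i by simp
qed (use assms in auto)

lemma prod_list_one: "(\<And>x. x \<in> set xs \<Longrightarrow> f x = (1::'a::comm_monoid_mult)) \<Longrightarrow> prod_list (map f xs) = 1"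
  by (induction xs) auto

lemma cancel_l: "X \<in> carrier_mat n n \<Longrightarrow> Y \<in> carrier_mat n n \<Longrightarrow> X * Y = 1\<^sub>m n \<Longrightarrow> Z \<in> carrier_mat n m
  \<Longrightarrow> X * (Y * Z) = (Z :: 'a::field mat)"
  by (simp add: assoc_mult_mat[symmetric, of X n n Y n Z m])

lemma aux_field: "(1/s)*(a*x) + (-b/s)*x = (a-b)/s*(x::'a::field)"
  by (simp add: diff_divide_distrib algebra_simps)

lemma cancel_v: "X \<in> carrier_mat n n \<Longrightarrow> Y \<in> carrier_mat n n \<Longrightarrow> X * Y = 1\<^sub>m n \<Longrightarrow> w \<in> carrier_vec n
  \<Longrightarrow> X *\<^sub>v (Y *\<^sub>v w) = (w :: 'a::field vec)"
  by (simp add: assoc_mult_mat_vec[symmetric, of X n n Y n w])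

theorem proposition4p9:
  fixes d :: nat and A :: "'a::field mat" and Es :: "nat \<Rightarrow> 'a mat"
    and th ths :: "nat \<Rightarrow> 'a"
  assumes d: "d \<ge> 1"
    and A_carrier: "A \<in> carrier_mat (Suc d) (Suc d)"
    and Es_carrier: "\<And>i. i \<le> d \<Longrightarrow> Es i \<in> carrier_mat (Suc d) (Suc d)"
    and Es_orth: "\<And>i j. i \<le> d \<Longrightarrow> j \<le> d \<Longrightarrow>
         Es i * Es j = (if i = j then Es i else 0\<^sub>m (Suc d) (Suc d))"
    and Es_rank: "\<And>i. i \<le> d \<Longrightarrow> vec_space.rank (Suc d) (Es i) = 1"
    and tridiag0: "\<And>i j. i \<le> d \<Longrightarrow> j \<le> d \<Longrightarrow> i + 1 < j \<or> j + 1 < i \<Longrightarrow>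
         Es i * A * Es j = 0\<^sub>m (Suc d) (Suc d)"
    and tridiag1: "\<And>i j. i \<le> d \<Longrightarrow> j \<le> d \<Longrightarrow> i + 1 = j \<or> j + 1 = i \<Longrightarrow>
         Es i * A * Es j \<noteq> 0\<^sub>m (Suc d) (Suc d)"
    and th_distinct: "\<And>i j. i \<le> d \<Longrightarrow> j \<le> d \<Longrightarrow> i \<noteq> j \<Longrightarrow> th i \<noteq> th j"
    and th_eig: "\<And>i. i \<le> d \<Longrightarrow> eigenvalue A (th i)"
    and ths0: "\<And>i. 1 \<le> i \<Longrightarrow> i \<le> d \<Longrightarrow> ths i \<noteq> ths 0"
  shows "Delta_connected d A th Es ths"
proof -
  define n where "n = Suc d"
  have lt: "k < n \<longleftrightarrow> k \<le> d" for k unfolding n_def by auto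
  have A: "A \<in> carrier_mat n n" using A_carrier n_def by simp
  have Es: "Es i \<in> carrier_mat n n" if "i < n" for i using Es_carrier that lt n_def by simp
  have "\<forall>k. \<exists>w. k < n \<longrightarrow> w \<in> carrier_vec n \<and> w \<noteq> 0\<^sub>v n \<and> A *\<^sub>v w = th k \<cdot>\<^sub>v w"
    using th_eig A lt unfolding eigenvalue_def eigenvector_def by auto
  then obtain v where v: "\<And>k. k < n \<Longrightarrow> v k \<in> carrier_vec n"
    "\<And>k. k < n \<Longrightarrow> v k \<noteq> 0\<^sub>v n" "\<And>k. k < n \<Longrightarrow> A *\<^sub>v v k = th k \<cdot>\<^sub>v v k"
    by metis
  define E where "E a = prim_idem d A th a" for a
  have E: "E a \<in> carrier_mat n n" for a
    unfolding E_def prim_idem_def n_def[symmetric] by (rule fold_carrier[OF A])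
  have Ev: "E a *\<^sub>v v k = (if a = k then v k else 0\<^sub>v n)" if a: "a < n" and k: "k < n" for a k
  proof -
    have "E a *\<^sub>v v k = prod_list (map (\<lambda>j. (1 / (th a - th j)) * (th k - th j)) (filter (\<lambda>j. j \<noteq> a) [0..<n])) \<cdot>\<^sub>v v k"
      unfolding E_def prim_idem_def n_def[symmetric] by (rule fold_vec[OF A v(1,3)[OF k]])
    also have "\<dots> = (if a = k then v k else 0\<^sub>v n)"
    proof (cases "a = k")
      case True
      have "prod_list (map (\<lambda>j. (1 / (th a - th j)) * (th k - th j)) (filter (\<lambda>j. j \<noteq> a) [0..<n])) = 1"
        using True th_distinct a lt by (intro prod_list_one) auto
      then show ?thesis using True v(1)[OF k] by simp
    next
      case False
      have "0 \<in> set (map (\<lambda>j. (1 / (th a - th j)) * (th k - th j)) (filter (\<lambda>j. j \<noteq> a) [0..<n]))"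
        using False k by force
      then have "prod_list (map (\<lambda>j. (1 / (th a - th j)) * (th k - th j)) (filter (\<lambda>j. j \<noteq> a) [0..<n])) = 0"
        by (simp add: prod_list_zero_iff)
      then show ?thesis using False v(1)[OF k] by (intro eq_vecI) auto
    qed
    finally show ?thesis .
  qed
  define W where "W = mat n n (\<lambda>(i,k). v k $ i)"
  have W: "W \<in> carrier_mat n n" unfolding W_def by simp
  have colW: "col W k = v k" if "k < n" for k
    using v(1)[OF that] that unfolding W_def by (intro eq_vecI) auto
  have "det W \<noteq> 0" unfolding W_def
    by (rule basis_invertible[OF v(1,2) E Ev])
  then obtain Wi where Wi: "Wi \<in> carrier_mat n n" "W * Wi = 1\<^sub>m n" "Wi * W = 1\<^sub>m n"
    using inverse_ex[OF W] by blast
  have "\<forall>i. \<exists>w. i < n \<longrightarrow> w \<in> carrier_vec n \<and> w \<noteq> 0\<^sub>v n \<and> Es i *\<^sub>v w = w"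
  proof (intro allI)
    fix i show "\<exists>w. i < n \<longrightarrow> w \<in> carrier_vec n \<and> w \<noteq> 0\<^sub>v n \<and> Es i *\<^sub>v w = w"
    proof (cases "i < n")
      case True
      have r0: "vec_space.rank n (0\<^sub>m n n :: 'a mat) = 0" by (rule vec_space.rank_0I)
      have id: "i \<le> d" using True lt by simp
      have r1: "vec_space.rank n (Es i) = 1" unfolding n_def by (rule Es_rank[OF id])
      have nz: "Es i \<noteq> 0\<^sub>m n n"
      proof
        assume "Es i = 0\<^sub>m n n"
        with r1 r0 show False by simp
      qed
      have "\<exists>k<n. col (Es i) k \<noteq> 0\<^sub>v n"
      proof (rule ccontr)
        assume "\<not> ?thesis"
        then have allz: "\<And>k. k < n \<Longrightarrow> col (Es i) k = 0\<^sub>v n" by blast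
        have "Es i = 0\<^sub>m n n"
        proof (rule eq_matI)
          fix r k assume r: "r < dim_row (0\<^sub>m n n :: 'a mat)" and k: "k < dim_col (0\<^sub>m n n :: 'a mat)"
          have "Es i $$ (r,k) = col (Es i) k $ r" using Es[OF True] r k by simp
          also have "\<dots> = 0" using allz[of k] r k by simp
          finally show "Es i $$ (r,k) = 0\<^sub>m n n $$ (r,k)" using r k by simp
        qed (use Es[OF True] in auto)
        then show False using nz by simp
      qed
      then obtain k where k: "k < n" "col (Es i) k \<noteq> 0\<^sub>v n" by blast
      have "Es i *\<^sub>v col (Es i) k = col (Es i * Es i) k" by (rule col_mult2[symmetric, OF Es[OF True] Es[OF True] k(1)])
      also have "\<dots> = col (Es i) k" using Es_orth[of i i] True lt by simp
      finally show ?thesis using k Es[OF True] by (intro exI[of _ "col (Es i) k"]) auto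
    qed simp
  qed
  then obtain u where u: "\<And>k. k < n \<Longrightarrow> u k \<in> carrier_vec n"
    "\<And>k. k < n \<Longrightarrow> u k \<noteq> 0\<^sub>v n" "\<And>k. k < n \<Longrightarrow> Es k *\<^sub>v u k = u k"
    by metis
  have Eu: "Es a *\<^sub>v u k = (if a = k then u k else 0\<^sub>v n)" if a: "a < n" and k: "k < n" for a k
  proof (cases "a = k")
    case True then show ?thesis using u k by simp
  next
    case False
    have "Es a *\<^sub>v u k = Es a *\<^sub>v (Es k *\<^sub>v u k)" using u k by simp
    also have "\<dots> = (Es a * Es k) *\<^sub>v u k" by (rule assoc_mult_mat_vec[symmetric, OF Es[OF a] Es[OF k] u(1)[OF k]])
    also have "\<dots> = 0\<^sub>m n n *\<^sub>v u k" using Es_orth[of a k] a k lt False n_def by simp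
    also have "\<dots> = 0\<^sub>v n" using u(1)[OF k] by (intro eq_vecI) (auto simp: scalar_prod_def)
    finally show ?thesis using False by simp
  qed
  define U where "U = mat n n (\<lambda>(i,k). u k $ i)"
  have U: "U \<in> carrier_mat n n" unfolding U_def by simp
  have colU: "col U k = u k" if "k < n" for k
    using u(1)[OF that] that unfolding U_def by (intro eq_vecI) auto
  have "det U \<noteq> 0" unfolding U_def
    by (rule basis_invertible[OF u(1,2) Es Eu])
  then obtain Ui where Ui: "Ui \<in> carrier_mat n n" "U * Ui = 1\<^sub>m n" "Ui * U = 1\<^sub>m n"
    using inverse_ex[OF U] by blast
  define As where "As = dual_op d Es ths"
  have As_u: "As \<in> carrier_mat n n \<and> As *\<^sub>v u k = ths k \<cdot>\<^sub>v u k" if k: "k < n" for k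
  proof -
    have "foldr (\<lambda>i M. ths i \<cdot>\<^sub>m Es i + M) [0..<n] (0\<^sub>m n n) \<in> carrier_mat n n \<and>
         foldr (\<lambda>i M. ths i \<cdot>\<^sub>m Es i + M) [0..<n] (0\<^sub>m n n) *\<^sub>v u k = (if k \<in> set [0..<n] then ths k else 0) \<cdot>\<^sub>v u k"
      by (rule dual_fold[OF u(1)[OF k]]) (use Es Eu k in auto)
    moreover have "As = foldr (\<lambda>i M. ths i \<cdot>\<^sub>m Es i + M) [0..<n] (0\<^sub>m n n)"
      unfolding As_def dual_op_def n_def ..
    moreover have "k \<in> set [0..<n]" using k by simp
    ultimately show ?thesis by simp
  qed
  have As: "As \<in> carrier_mat n n" using As_u[of 0] unfolding n_def by simp
  note canc = cancel_l[OF Wi(1) W Wi(3), where m=n] cancel_l[OF W Wi(1) Wi(2), where m=n]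
    cancel_l[OF Ui(1) U Ui(3), where m=n] cancel_l[OF U Ui(1) Ui(2), where m=n]
  note cancv = cancel_v[OF Wi(1) W Wi(3)] cancel_v[OF W Wi(1) Wi(2)]
    cancel_v[OF Ui(1) U Ui(3)] cancel_v[OF U Ui(1) Ui(2)]
  define Dm where "Dm = mat n n (\<lambda>(i,j). if i = j then th i else 0)"
  define Th where "Th = mat n n (\<lambda>(i,j). if i = j then ths i else 0)"
  have Dm: "Dm \<in> carrier_mat n n" unfolding Dm_def by simp
  have Th: "Th \<in> carrier_mat n n" unfolding Th_def by simp
  have AW: "A * W = W * Dm" unfolding Dm_def by (rule eig_cols[OF A W]) (simp add: colW v(3))
  have AU: "As * U = U * Th" unfolding Th_def by (rule eig_cols[OF As U]) (simp add: colU As_u)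
  have WiA: "Wi * A = Dm * Wi"
  proof -
    have "Wi * A = Wi * (A * (W * Wi))" using Wi A by simp
    also have "\<dots> = Wi * ((A * W) * Wi)" using Wi A W by (simp add: assoc_mult_mat[of _ n n _ n _ n] mc_sq canc)
    also have "\<dots> = (Wi * W) * (Dm * Wi)" unfolding AW using Wi W Dm by (simp add: assoc_mult_mat[of _ n n _ n _ n] mc_sq canc)
    also have "\<dots> = Dm * Wi" using Wi Dm W by (simp add: mc_sq canc)
    finally show ?thesis .
  qed
  define T where "T = Ui * A * U"
  define B where "B = Wi * As * W"
  define Mm where "Mm = Wi * U"
  have T: "T \<in> carrier_mat n n" unfolding T_def using Ui A U by simp
  have B: "B \<in> carrier_mat n n" unfolding B_def using Wi As W by simp
  have Mm: "Mm \<in> carrier_mat n n" unfolding Mm_def using Wi U by simp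
  have MT: "Mm * T = Dm * Mm"
  proof -
    have "Mm * T = Wi * ((U * Ui) * (A * U))" unfolding Mm_def T_def using Wi U Ui A
      by (simp add: assoc_mult_mat[of _ n n _ n _ n] mc_sq canc)
    also have "\<dots> = (Wi * A) * U" using Wi U Ui A by (simp add: assoc_mult_mat[of _ n n _ n _ n] mc_sq canc)
    also have "\<dots> = Dm * Mm" unfolding WiA Mm_def using Wi U Dm by (simp add: assoc_mult_mat[of _ n n _ n _ n] mc_sq canc)
    finally show ?thesis .
  qed
  have MTh: "Mm * Th = B * Mm"
  proof -
    have "Mm * Th = Wi * (As * U)" unfolding Mm_def AU using Wi U Th
      by (simp add: assoc_mult_mat[of _ n n _ n _ n] mc_sq canc)
    also have "\<dots> = Wi * (As * ((W * Wi) * U))" using Wi U As by simp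
    also have "\<dots> = B * Mm" unfolding B_def Mm_def using Wi U As W
      by (simp add: assoc_mult_mat[of _ n n _ n _ n] mc_sq canc)
    finally show ?thesis .
  qed
  have Tent: "T $$ (i,j) = 0 \<longleftrightarrow> Es i * A * Es j = 0\<^sub>m n n" if i: "i < n" and j: "j < n" for i j
    using entry_crit[OF U Ui(1) Ui(2) Ui(3) Es[OF i] i _ Es[OF j] j _ A] colU Eu i j
    unfolding T_def by simp
  have Bent: "B $$ (a,b) = 0" if a: "a < n" and b: "b < n" and z: "E a * As * E b = 0\<^sub>m n n" for a b
    using entry_crit[OF W Wi(1) Wi(2) Wi(3) E a _ E b _ As] colW Ev a b z
    unfolding B_def by simp
  show ?thesis
    unfolding Delta_connected_def
  proof (rule ccontr)
    let ?Rel = "{(x, y). Delta_adj d A th Es ths x y}"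
    assume "\<not> (\<forall>i\<le>d. \<forall>j\<le>d. (i, j) \<in> ?Rel\<^sup>*)"
    then obtain i0 j0 where i0: "i0 \<le> d" and j0: "j0 \<le> d" and nr: "(i0, j0) \<notin> ?Rel\<^sup>*" by blast
    define S where "S = {k. (i0,k) \<in> ?Rel\<^sup>*}"
    have i0S: "i0 \<in> S" unfolding S_def by simp
    have j0S: "j0 \<notin> S" unfolding S_def using nr by simp
    have i0n: "i0 < n" and j0n: "j0 < n" using i0 j0 lt by auto
    have Bz: "B $$ (a,b) = 0" if a: "a < n" and b: "b < n" and aS: "a \<in> S" and bS: "b \<notin> S" for a b
    proof -
      have nadj: "\<not> Delta_adj d A th Es ths a b"
      proof
        assume "Delta_adj d A th Es ths a b"
        then have "(i0, b) \<in> ?Rel\<^sup>*" using aS unfolding S_def by (auto intro: rtrancl_into_rtrancl)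
        then show False using bS unfolding S_def by simp
      qed
      have "a \<noteq> b" using aS bS by auto
      then have "E a * As * E b = 0\<^sub>m n n"
        using nadj a b lt unfolding Delta_adj_def E_def As_def n_def by auto
      then show ?thesis by (rule Bent[OF a b])
    qed
    define R where "R = {y \<in> carrier_vec n. \<forall>a<n. a \<in> S \<longrightarrow> (Mm *\<^sub>v y) $ a = 0}"
    have lin: "c1 \<cdot>\<^sub>v y1 + c2 \<cdot>\<^sub>v y2 \<in> R" if y1: "y1 \<in> R" and y2: "y2 \<in> R" for c1 c2 y1 y2
    proof -
      have c: "y1 \<in> carrier_vec n" "y2 \<in> carrier_vec n" using y1 y2 unfolding R_def by auto
      have "Mm *\<^sub>v (c1 \<cdot>\<^sub>v y1 + c2 \<cdot>\<^sub>v y2) = c1 \<cdot>\<^sub>v (Mm *\<^sub>v y1) + c2 \<cdot>\<^sub>v (Mm *\<^sub>v y2)"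
        using c Mm by (simp add: mult_add_distrib_mat_vec[OF Mm] mult_mat_vec[OF Mm])
      then have e: "Mm *\<^sub>v (c1 \<cdot>\<^sub>v y1 + c2 \<cdot>\<^sub>v y2) = c1 \<cdot>\<^sub>v (Mm *\<^sub>v y1) + c2 \<cdot>\<^sub>v (Mm *\<^sub>v y2)" .
      have "(Mm *\<^sub>v (c1 \<cdot>\<^sub>v y1 + c2 \<cdot>\<^sub>v y2)) $ a = 0" if a: "a < n" "a \<in> S" for a
      proof -
        have z1: "(Mm *\<^sub>v y1) $ a = 0" and z2: "(Mm *\<^sub>v y2) $ a = 0" using y1 y2 a unfolding R_def by auto
        have "(Mm *\<^sub>v (c1 \<cdot>\<^sub>v y1 + c2 \<cdot>\<^sub>v y2)) $ a = c1 * (Mm *\<^sub>v y1) $ a + c2 * (Mm *\<^sub>v y2) $ a"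
          unfolding e using a Mm c by (simp del: index_mult_mat_vec)
        then show ?thesis unfolding z1 z2 by simp
      qed
      then show ?thesis using c unfolding R_def by auto
    qed
    have Tinv: "T *\<^sub>v y \<in> R" if y: "y \<in> R" for y
    proof -
      have c: "y \<in> carrier_vec n" using y unfolding R_def by auto
      have "Mm *\<^sub>v (T *\<^sub>v y) = (Mm * T) *\<^sub>v y" using Mm T c by simp
      also have "\<dots> = Dm *\<^sub>v (Mm *\<^sub>v y)" unfolding MT using Dm Mm c by simp
      finally have e: "Mm *\<^sub>v (T *\<^sub>v y) = Dm *\<^sub>v (Mm *\<^sub>v y)" .
      have "(Mm *\<^sub>v (T *\<^sub>v y)) $ a = 0" if "a < n" "a \<in> S" for a
        unfolding e Dm_def using diag_vec[of "Mm *\<^sub>v y" n a th] that y Mm c unfolding R_def by simp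
      then show ?thesis using T c unfolding R_def by auto
    qed
    have Thinv: "Th *\<^sub>v y \<in> R" if y: "y \<in> R" for y
    proof -
      have c: "y \<in> carrier_vec n" using y unfolding R_def by auto
      have "Mm *\<^sub>v (Th *\<^sub>v y) = (Mm * Th) *\<^sub>v y" using Mm Th c by simp
      also have "\<dots> = B *\<^sub>v (Mm *\<^sub>v y)" unfolding MTh using B Mm c by simp
      finally have e: "Mm *\<^sub>v (Th *\<^sub>v y) = B *\<^sub>v (Mm *\<^sub>v y)" .
      have "(Mm *\<^sub>v (Th *\<^sub>v y)) $ a = 0" if a: "a < n" and aS: "a \<in> S" for a
      proof -
        have "(B *\<^sub>v (Mm *\<^sub>v y)) $ a = (\<Sum>b=0..<n. B $$ (a,b) * (Mm *\<^sub>v y) $ b)"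
          using a B Mm c by (simp add: scalar_prod_def)
        also have "\<dots> = 0"
        proof (rule sum.neutral, intro ballI)
          fix b assume "b \<in> {0..<n}"
          then have b: "b < n" by simp
          show "B $$ (a,b) * (Mm *\<^sub>v y) $ b = 0"
          proof (cases "b \<in> S")
            case True then show ?thesis using y b unfolding R_def by simp
          next
            case False then show ?thesis using Bz[OF a b aS] by simp
          qed
        qed
        finally show ?thesis unfolding e .
      qed
      then show ?thesis using Th c unfolding R_def by auto
    qed
    have yv: "Ui *\<^sub>v v k \<in> carrier_vec n" if "k < n" for k using Ui v(1)[OF that] by simp
    have Mv: "Mm *\<^sub>v (Ui *\<^sub>v v k) = unit_vec n k" if k: "k < n" for k
    proof -
      have "Mm *\<^sub>v (Ui *\<^sub>v v k) = Wi *\<^sub>v (U *\<^sub>v (Ui *\<^sub>v v k))" unfolding Mm_def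
        using Wi U Ui v(1)[OF k] by simp
      also have "\<dots> = Wi *\<^sub>v (W *\<^sub>v unit_vec n k)" using v(1)[OF k] mat_unit_vec[OF W k] colW[OF k] cancv by simp
      also have "\<dots> = unit_vec n k" using cancv by simp
      finally show ?thesis .
    qed
    have Tz: "T $$ (l, j) = 0" if "l < n" "j < n" "Suc j < l \<or> Suc l < j" for l j
    proof -
      have "Es l * A * Es j = 0\<^sub>m (Suc d) (Suc d)" using tridiag0[of l j] that lt by auto
      then show ?thesis using Tent[of l j] that n_def by simp
    qed
    have Tnz: "T $$ (l, j) \<noteq> 0" if "l < n" "j < n" "Suc j = l \<or> Suc l = j" for l j
    proof -
      have "Es l * A * Es j \<noteq> 0\<^sub>m (Suc d) (Suc d)" using tridiag1[of l j] that lt by auto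
      then show ?thesis using Tent[of l j] that n_def by simp
    qed
    have Fstep: "(y $ 0) \<cdot>\<^sub>v unit_vec n 0 \<in> R" if y: "y \<in> R" for y
    proof -
      have c: "y \<in> carrier_vec n" using y R_def by auto
      define z where "z js = vec n (\<lambda>k. prod_list (map (\<lambda>j. (ths k - ths j) / (ths 0 - ths j)) js) * y $ k)" for js
      have zR: "set js \<subseteq> {1..d} \<Longrightarrow> z js \<in> R" for js
      proof (induction js)
        case Nil
        have "z [] = y" unfolding z_def using c by (intro eq_vecI) auto
        then show ?case using y by simp
      next
        case (Cons j js)
        have j: "1 \<le> j" "j \<le> d" using Cons.prems by auto
        have s: "ths 0 - ths j \<noteq> 0" using ths0[OF j] by simp
        have zj: "z js \<in> R" using Cons by auto
        have zc: "z js \<in> carrier_vec n" unfolding z_def by simp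
        have "z (j # js) = (1 / (ths 0 - ths j)) \<cdot>\<^sub>v (Th *\<^sub>v z js) + (- ths j / (ths 0 - ths j)) \<cdot>\<^sub>v z js"
        proof (rule eq_vecI)
          fix k assume k: "k < dim_vec ((1 / (ths 0 - ths j)) \<cdot>\<^sub>v (Th *\<^sub>v z js) + (- ths j / (ths 0 - ths j)) \<cdot>\<^sub>v z js)"
          then have k: "k < n" using Th zc by simp
          have dv: "(Th *\<^sub>v z js) $ k = ths k * z js $ k" unfolding Th_def by (rule diag_vec[OF zc k])
          have "((1 / (ths 0 - ths j)) \<cdot>\<^sub>v (Th *\<^sub>v z js) + (- ths j / (ths 0 - ths j)) \<cdot>\<^sub>v z js) $ k
              = (1 / (ths 0 - ths j)) * (ths k * z js $ k) + (- ths j / (ths 0 - ths j)) * z js $ k"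
            using k Th zc dv by simp
          also have "\<dots> = (ths k - ths j) / (ths 0 - ths j) * z js $ k"
            by (rule aux_field)
          also have "\<dots> = z (j # js) $ k" unfolding z_def using k by simp
          finally show "z (j # js) $ k = ((1 / (ths 0 - ths j)) \<cdot>\<^sub>v (Th *\<^sub>v z js) + (- ths j / (ths 0 - ths j)) \<cdot>\<^sub>v z js) $ k" by simp
        qed (use Th zc in \<open>simp add: z_def\<close>)
        then show ?case using lin[OF Thinv[OF zj] zj] by simp
      qed
      have "z [1..<Suc d] = (y $ 0) \<cdot>\<^sub>v unit_vec n 0"
      proof (rule eq_vecI)
        fix k assume "k < dim_vec ((y $ 0) \<cdot>\<^sub>v unit_vec n 0)"
        then have k: "k < n" by simp
        have zk: "z js $ k = prod_list (map (\<lambda>j. (ths k - ths j) / (ths 0 - ths j)) js) * y $ k" for js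
          unfolding z_def using k by simp
        show "z [1..<Suc d] $ k = ((y $ 0) \<cdot>\<^sub>v unit_vec n 0) $ k"
        proof (cases "k = 0")
          case True
          have P1: "prod_list (map (\<lambda>j. (ths k - ths j) / (ths 0 - ths j)) [1..<Suc d]) = 1"
          proof (rule prod_list_one)
            fix j assume "j \<in> set [1..<Suc d]"
            then have "1 \<le> j" "j \<le> d" by auto
            then have "ths j \<noteq> ths 0" by (rule ths0)
            then show "(ths k - ths j) / (ths 0 - ths j) = 1" using True by simp
          qed
          have "z [1..<Suc d] $ k = y $ k" unfolding zk P1 by simp
          also have "\<dots> = ((y $ 0) \<cdot>\<^sub>v unit_vec n 0) $ k" using True k by simp
          finally show ?thesis .
        next
          case False
          have "0 \<in> set (map (\<lambda>j. (ths k - ths j) / (ths 0 - ths j)) [1..<Suc d])"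
          proof -
            have kd: "k \<le> d" using k lt[of k] by simp
            have kin: "k \<in> set [1..<Suc d]" unfolding set_upt using False kd by simp
            have "(\<lambda>j. (ths k - ths j) / (ths 0 - ths j)) k = 0" by simp
            then show ?thesis unfolding set_map by (rule image_eqI[where x=k, OF sym]) (rule kin)
          qed
          then have P0: "prod_list (map (\<lambda>j. (ths k - ths j) / (ths 0 - ths j)) [1..<Suc d]) = 0"
            unfolding prod_list_zero_iff .
          have "z [1..<Suc d] $ k = 0" unfolding zk P0 by simp
          also have "\<dots> = ((y $ 0) \<cdot>\<^sub>v unit_vec n 0) $ k" using False k by simp
          finally show ?thesis .
        qed
      qed (simp add: z_def)
      moreover have "set [1..<Suc d] \<subseteq> {1..d}" unfolding set_upt by auto
      then have "z [1..<Suc d] \<in> R" by (rule zR)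
      ultimately show ?thesis by simp
    qed
    have e0: "unit_vec n 0 \<in> R" if y: "y \<in> R" "y $ 0 \<noteq> 0" for y
    proof -
      have c: "y \<in> carrier_vec n" using y R_def by auto
      have "unit_vec n 0 = (1 / y $ 0) \<cdot>\<^sub>v ((y $ 0) \<cdot>\<^sub>v unit_vec n 0) + 0 \<cdot>\<^sub>v y"
        using y(2) c by (intro eq_vecI) auto
      then show ?thesis using lin[OF Fstep[OF y(1)] y(1)] by metis
    qed
    show False
    proof (cases "\<exists>y\<in>R. y $ 0 \<noteq> 0")
      case True
      then obtain y where y: "y \<in> R" "y $ 0 \<noteq> 0" by blast
      have E0: "unit_vec n 0 \<in> R" by (rule e0[OF y])
      have all: "\<forall>y \<in> carrier_vec n. (\<forall>l<n. j < l \<longrightarrow> y $ l = 0) \<longrightarrow> y \<in> R" if "j \<le> d" for j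
        using that
      proof (induction j)
        case 0
        show ?case
        proof (intro ballI impI)
          fix y :: "'a vec" assume c: "y \<in> carrier_vec n" and z: "\<forall>l<n. 0 < l \<longrightarrow> y $ l = 0"
          have "y = (y $ 0) \<cdot>\<^sub>v unit_vec n 0 + 0 \<cdot>\<^sub>v unit_vec n 0"
            using c z by (intro eq_vecI) auto
          then show "y \<in> R" using lin[OF E0 E0] by metis
        qed
      next
        case (Suc j)
        have jd: "j \<le> d" "Suc j \<le> d" using Suc by auto
        have jn: "j < n" "Suc j < n" using jd lt by auto
        have IH: "\<forall>y \<in> carrier_vec n. (\<forall>l<n. j < l \<longrightarrow> y $ l = 0) \<longrightarrow> y \<in> R" using Suc.IH jd by auto
        have ej: "unit_vec n j \<in> R" using IH by auto
        define w where "w = T *\<^sub>v unit_vec n j"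
        have wR: "w \<in> R" using Tinv[OF ej] w_def by simp
        have wc: "w \<in> carrier_vec n" using T by (simp add: w_def)
        have went: "w $ l = T $$ (l, j)" if "l < n" for l
          unfolding w_def mat_unit_vec[OF T jn(1)] using that jn T by simp
        show ?case
        proof (intro ballI impI)
          fix y :: "'a vec" assume c: "y \<in> carrier_vec n" and z: "\<forall>l<n. Suc j < l \<longrightarrow> y $ l = 0"
          define cc where "cc = y $ Suc j / T $$ (Suc j, j)"
          define zz where "zz = 1 \<cdot>\<^sub>v y + (- cc) \<cdot>\<^sub>v w"
          have zzc: "zz \<in> carrier_vec n" using c wc zz_def by simp
          have "zz $ l = 0" if l: "l < n" "j < l" for l
          proof (cases "l = Suc j")
            case True
            have "T $$ (Suc j, j) \<noteq> 0" using Tnz[of "Suc j" j] jn by simp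
            then show ?thesis unfolding zz_def cc_def using True l c wc went[OF l(1)] by simp
          next
            case False
            then have "Suc j < l" using l by simp
            then show ?thesis unfolding zz_def using z l c wc went[OF l(1)] Tz[of l j] jn by simp
          qed
          then have zzR: "zz \<in> R" using IH zzc by auto
          have "y = 1 \<cdot>\<^sub>v zz + cc \<cdot>\<^sub>v w" using c wc by (intro eq_vecI) (auto simp: zz_def)
          then show "y \<in> R" using lin[OF zzR wR] by metis
        qed
      qed
      have "Ui *\<^sub>v v i0 \<in> R" using all[OF order_refl] yv[OF i0n] lt by auto
      then have "(Mm *\<^sub>v (Ui *\<^sub>v v i0)) $ i0 = 0" using i0S i0n R_def by auto
      then show False using Mv[OF i0n] i0n by simp
    next
      case False
      define y where "y = Ui *\<^sub>v v j0"
      have yc: "y \<in> carrier_vec n" using yv[OF j0n] y_def by simp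
      have yR: "y \<in> R" unfolding R_def using yc Mv[OF j0n] j0S j0n y_def by auto
      have y0: "y $ 0 = 0" using False yR by auto
      have Ty: "T *\<^sub>v y = th j0 \<cdot>\<^sub>v y"
      proof -
        have "T *\<^sub>v y = Ui *\<^sub>v (A *\<^sub>v (U *\<^sub>v (Ui *\<^sub>v v j0)))" unfolding T_def y_def
          using Ui A U v(1)[OF j0n] by (simp add: mc_sq assoc_mult_mat_vec[of _ n n _ n])
        also have "\<dots> = Ui *\<^sub>v (th j0 \<cdot>\<^sub>v v j0)" using cancv v(1,3)[OF j0n] by simp
        also have "\<dots> = th j0 \<cdot>\<^sub>v y" unfolding y_def by (rule mult_mat_vec[OF Ui(1) v(1)[OF j0n]])
        finally show ?thesis .
      qed
      have zero: "\<forall>l \<le> j. y $ l = 0" if "j \<le> d" for j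
        using that
      proof (induction j)
        case 0 then show ?case using y0 by auto
      next
        case (Suc j)
        have IH: "\<forall>l\<le>j. y $ l = 0" using Suc by auto
        have jn: "j < n" "Suc j < n" using Suc lt by auto
        have "(T *\<^sub>v y) $ j = (\<Sum>m=0..<n. T $$ (j,m) * y $ m)" using T yc jn by (simp add: scalar_prod_def)
        also have "\<dots> = T $$ (j, Suc j) * y $ Suc j"
        proof (rule sum_single)
          fix m assume m: "m < n" "m \<noteq> Suc j"
          show "T $$ (j,m) * y $ m = 0"
          proof (cases "m \<le> j")
            case True then show ?thesis using IH by simp
          next
            case False then show ?thesis using Tz[of j m] m jn by simp
          qed
        qed (use jn in simp)
        finally have e1: "(T *\<^sub>v y) $ j = T $$ (j, Suc j) * y $ Suc j" .
        have e2: "(T *\<^sub>v y) $ j = th j0 * y $ j" unfolding Ty using yc jn by simp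
        have "T $$ (j, Suc j) \<noteq> 0" using Tnz[of j "Suc j"] jn by simp
        then have "y $ Suc j = 0" using e1 e2 IH by simp
        then show ?case using IH le_Suc_eq by auto
      qed
      have "y = 0\<^sub>v n" using zero[OF order_refl] yc lt by (intro eq_vecI) auto
      then have y0v: "Ui *\<^sub>v v j0 = 0\<^sub>v n" unfolding y_def .
      have "v j0 = U *\<^sub>v (Ui *\<^sub>v v j0)" using cancv v(1)[OF j0n] by simp
      also have "\<dots> = 0\<^sub>v n" unfolding y0v using U by (intro eq_vecI) (auto simp: scalar_prod_def)
      finally have "v j0 = 0\<^sub>v n" .
      then show False using v(2)[OF j0n] by simp
    qed
  qed
qed

end
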